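(* Let $X,Y$ be Banach spaces, $F:X\rightrightarrows Y$ a set-valued mapping with locally closed graph, and $(\bar x,\bar y)\in\operatorname{gr}F$. Suppose there are a neighborhood $W$ of $(\bar x,\bar y)$ and numbers $c>0$, $\lambda\in[0,1)$ such that for every $(x,y)\in W\cap\operatorname{gr}F$, $$\sup_{z\in S_Y} d\big(z,\ DF(x,y)(cB_X)\big)\le\lambda.$$ Then $\operatorname{sur}F(\bar x|\bar y)\ge\frac{1-\lambda}{c}$.
   Context: $S_Y$ is the unit sphere, $B_X$ the closed unit ball. The contingent cone $T(Q,z)$ to $Q$ at $z\in Q$ is the set of $h$ for which there are $t_k\searrow0$, $h_k\to h$ with $z+t_kh_k\in Q$. The contingent derivative is $DF(x,y)(h)=\{v:(h,v)\in T(\operatorname{gr}F,(x,y))\}$, and $DF(x,y)(cB_X)=\bigcup_{\|h\|\le c}DF(x,y)(h)$. $\operatorname{sur}F(\bar x|\bar y)$ is the supremum of $r>0$ for which there is $\varepsilon>0$ with $B(y,rt)\cap B(\bar y,\varepsilon)\subset F(B(x,t))$ for all $(x,y)\in\operatorname{gr}F$ with $\|x-\bar x\|<\varepsilon$ and all $t\ge0$ ($0$ if none). *)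

theory Defs
  imports "HOL-Analysis.Analysis"
begin

definition graph :: "('a \<Rightarrow> 'b set) \<Rightarrow> ('a \<times> 'b) set" where
  "graph F = {(x, y). y \<in> F x}"

definition locally_closed_graph ::
  "('a::real_normed_vector \<Rightarrow> 'b::real_normed_vector set) \<Rightarrow> 'a \<Rightarrow> 'b \<Rightarrow> bool" where
  "locally_closed_graph F xb yb \<longleftrightarrow>
     (\<exists>r>0. closed (graph F \<inter> (cball xb r \<times> cball yb r)))"

definition contingent_cone :: "'a::real_normed_vector set \<Rightarrow> 'a \<Rightarrow> 'a set" where
  "contingent_cone Q z = {h. \<exists>(t::nat \<Rightarrow> real) hk.
      (\<forall>k. t k > 0) \<and> decseq t \<and> t \<longlonglongrightarrow> 0 \<and> hk \<longlonglongrightarrow> h \<and>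
      (\<forall>k. z + t k *\<^sub>R hk k \<in> Q)}"

definition contingent_derivative ::
  "('a::real_normed_vector \<Rightarrow> 'b::real_normed_vector set) \<Rightarrow> 'a \<Rightarrow> 'b \<Rightarrow> 'a \<Rightarrow> 'b set" where
  "contingent_derivative F x y h = {v. (h, v) \<in> contingent_cone (graph F) (x, y)}"

definition contingent_derivative_ball ::
  "('a::real_normed_vector \<Rightarrow> 'b::real_normed_vector set) \<Rightarrow> 'a \<Rightarrow> 'b \<Rightarrow> real \<Rightarrow> 'b set" where
  "contingent_derivative_ball F x y c = (\<Union>h\<in>cball 0 c. contingent_derivative F x y h)"

definition sur_rates ::
  "('a::real_normed_vector \<Rightarrow> 'b::real_normed_vector set) \<Rightarrow> 'a \<Rightarrow> 'b \<Rightarrow> real set" where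
  "sur_rates F xb yb = {r. r > 0 \<and> (\<exists>\<epsilon>>0. \<forall>x y t. (x, y) \<in> graph F \<and> norm (x - xb) < \<epsilon> \<and> t \<ge> 0 \<longrightarrow>
      ball y (r * t) \<inter> ball yb \<epsilon> \<subseteq> (\<Union>u\<in>ball x t. F u))}"

definition sur :: "('a::real_normed_vector \<Rightarrow> 'b::real_normed_vector set) \<Rightarrow> 'a \<Rightarrow> 'b \<Rightarrow> ereal" where
  "sur F xb yb = (if sur_rates F xb yb = {} then 0 else Sup (ereal ` sur_rates F xb yb))"

end

theory Submission
  imports Defs
begin


lemma ekeland:
  fixes S :: "'c::complete_space set" and f :: "'c \<Rightarrow> real" and D :: "'c \<Rightarrow> 'c \<Rightarrow> real"
  assumes S: "closed S" and x0: "x0 \<in> S" and fpos: "\<And>p. p \<in> S \<Longrightarrow> f p \<ge> 0"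
    and fc: "continuous_on S f"
    and tri: "\<And>p q r. D p r \<le> D p q + D q r" and refl: "\<And>p. D p p = 0"
    and kap: "\<kappa> > 0" and low: "\<And>p q. \<kappa> * dist p q \<le> D p q"
    and Dc: "\<And>p. continuous_on UNIV (\<lambda>q. D q p)"
  shows "\<exists>p\<in>S. f p + D p x0 \<le> f x0 \<and> (\<forall>q\<in>S. f p \<le> f q + D q p)"
proof -
  define Sx where "Sx p = {q\<in>S. f q + D q p \<le> f p}" for p
  define e :: "nat \<Rightarrow> real" where "e n = (1/2)^n" for n
  have epos: "e n > 0" for n by (simp add: e_def)
  have Dnn: "D p q \<ge> 0" for p q using low[of p q] kap
    by (metis order_trans mult_nonneg_nonneg zero_le_dist less_eq_real_def)
  have self: "p \<in> S \<Longrightarrow> p \<in> Sx p" for p by (simp add: Sx_def refl)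
  have SxS: "Sx p \<subseteq> S" for p by (auto simp: Sx_def)
  have clSx: "closed (Sx p)" for p
  proof -
    have "closed {q\<in>S. f q + D q p \<le> f p}"
      by (rule continuous_on_closed_Collect_le[OF _ continuous_on_const S])
        (intro continuous_intros fc continuous_on_subset[OF Dc], auto)
    then show ?thesis by (simp add: Sx_def)
  qed
  have trans: "q \<in> Sx p \<Longrightarrow> Sx q \<subseteq> Sx p" for p q
  proof
    fix r assume q: "q \<in> Sx p" and r: "r \<in> Sx q"
    have "D r p \<le> D r q + D q p" by (rule tri)
    with q r show "r \<in> Sx p" by (auto simp: Sx_def)
  qed
  have bdd: "bdd_below (f ` Sx p)" for p
    using fpos SxS by (auto intro!: bdd_belowI[of _ 0])
  have step: "\<exists>q. q \<in> Sx p \<and> f q \<le> Inf (f ` Sx p) + e n" if "p \<in> S" for p n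
  proof -
    have ne: "f ` Sx p \<noteq> {}" using self[OF that] by auto
    have "Inf (f ` Sx p) < Inf (f ` Sx p) + e n" using epos[of n] by simp
    from cInf_lessD[OF ne this] show ?thesis by force
  qed
  obtain P where P: "\<forall>n. (P n \<in> S \<and> (n = 0 \<longrightarrow> P n = x0)) \<and>
      (P (Suc n) \<in> Sx (P n) \<and> f (P (Suc n)) \<le> Inf (f ` Sx (P n)) + e n)"
    using dependent_nat_choice[of "\<lambda>n x. x \<in> S \<and> (n = 0 \<longrightarrow> x = x0)"
        "\<lambda>n x y. y \<in> Sx x \<and> f y \<le> Inf (f ` Sx x) + e n"]
    using x0 step SxS by blast
  have PS: "P n \<in> S" for n using P by blast
  have P0: "P 0 = x0" using P by blast
  have Psuc: "P (Suc n) \<in> Sx (P n)" for n using P by blast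
  have Pinf: "f (P (Suc n)) \<le> Inf (f ` Sx (P n)) + e n" for n using P by blast
  have mono: "Sx (P m) \<subseteq> Sx (P n)" if "n \<le> m" for m n
    using that
  proof (induction m rule: dec_induct)
    case base then show ?case by simp
  next
    case (step m) then show ?case using trans[OF Psuc[of m]] by blast
  qed
  have inS: "P m \<in> Sx (P n)" if "n \<le> m" for m n
    using mono[OF that] self[OF PS[of m]] by blast
  have diam: "D q (P (Suc n)) \<le> e n" if "q \<in> Sx (P (Suc n))" for q n
  proof -
    have q1: "q \<in> Sx (P n)" using mono[of n "Suc n"] that by auto
    have "Inf (f ` Sx (P n)) \<le> f q" using q1 bdd by (auto intro: cInf_lower)
    moreover have "f q + D q (P (Suc n)) \<le> f (P (Suc n))" using that by (simp add: Sx_def)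
    ultimately show ?thesis using Pinf[of n] by linarith
  qed
  have dd: "dist (P m) (P (Suc n)) \<le> e n / \<kappa>" if "Suc n \<le> m" for m n
  proof -
    have "\<kappa> * dist (P m) (P (Suc n)) \<le> e n" using low diam inS[OF that] order_trans by blast
    then show ?thesis using kap by (simp add: field_simps mult.commute)
  qed
  have cau: "Cauchy P"
  proof (rule metric_CauchyI)
    fix \<epsilon> :: real assume "\<epsilon> > 0"
    obtain N where N: "(1/2::real)^N < \<epsilon> * \<kappa> / 2"
      using real_arch_pow_inv[of "\<epsilon> * \<kappa> / 2" "1/2"] \<open>\<epsilon> > 0\<close> kap by auto
    show "\<exists>M. \<forall>m\<ge>M. \<forall>n\<ge>M. dist (P m) (P n) < \<epsilon>"
    proof (intro exI allI impI)
      fix m n assume "m \<ge> Suc N" "n \<ge> Suc N"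
      then have "dist (P m) (P n) \<le> e N / \<kappa> + e N / \<kappa>"
        using dd[of N m] dd[of N n] dist_triangle3[of "P m" "P n" "P (Suc N)"] by (simp add: dist_commute)
      also have "\<dots> < \<epsilon>" using N kap by (simp add: e_def field_simps)
      finally show "dist (P m) (P n) < \<epsilon>" .
    qed
  qed
  then obtain p where lim: "P \<longlonglongrightarrow> p" using Cauchy_convergent_iff convergent_def by blast
  have pin: "p \<in> Sx (P n)" for n
  proof -
    have "(\<lambda>m. P (m + n)) \<longlonglongrightarrow> p" using LIMSEQ_ignore_initial_segment[OF lim] .
    then show ?thesis using closed_sequentially[OF clSx, of "\<lambda>m. P (m + n)"] inS by simp
  qed
  have pS: "p \<in> S" using pin[of 0] SxS by auto
  have first: "f p + D p x0 \<le> f x0" using pin[of 0] P0 by (simp add: Sx_def)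
  have second: "f p \<le> f q + D q p" if q: "q \<in> S" for q
  proof (rule ccontr)
    assume nl: "\<not> f p \<le> f q + D q p"
    then have "q \<in> Sx p" using q by (simp add: Sx_def)
    then have qn: "q \<in> Sx (P n)" for n using trans[OF pin[of n]] by auto
    have le: "f p \<le> f q + e n" for n
    proof -
      have "f p + D p (P (Suc n)) \<le> f (P (Suc n))" using pin[of "Suc n"] by (simp add: Sx_def)
      moreover have "Inf (f ` Sx (P n)) \<le> f q" using qn[of n] bdd by (auto intro: cInf_lower)
      ultimately show ?thesis using Pinf[of n] Dnn[of p "P (Suc n)"] by linarith
    qed
    have "f p \<le> f q"
    proof (rule ccontr)
      assume "\<not> f p \<le> f q"
      then obtain N where "(1/2::real)^N < f p - f q"
        using real_arch_pow_inv[of "f p - f q" "1/2"] by auto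
      with le[of N] show False by (simp add: e_def)
    qed
    with nl Dnn[of q p] show False by linarith
  qed
  show ?thesis using pS first second by blast
qed


lemma zero_in_Dball:
  assumes "(x, y) \<in> graph F" "c \<ge> 0"
  shows "(0::'b::real_normed_vector) \<in> contingent_derivative_ball F x (y::'b) c"
proof -
  have "((0::'a::real_normed_vector), (0::'b)) \<in> contingent_cone (graph F) (x, y)"
    unfolding contingent_cone_def
  proof (intro CollectI exI conjI allI)
    show "0 < 1 / (real k + 1)" for k by simp
    show "decseq (\<lambda>k. 1 / (real k + 1))"
      by (rule decseq_SucI) (simp add: field_simps)
    show "(\<lambda>k. 1 / (real k + 1)) \<longlonglongrightarrow> 0" using LIMSEQ_inverse_real_of_nat
      by (simp add: inverse_eq_divide add.commute)
    show "(\<lambda>k. (0::'a \<times> 'b)) \<longlonglongrightarrow> (0, 0)" by (simp add: zero_prod_def)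
    show "(x, y) + (1 / (real k + 1)) *\<^sub>R (0::'a \<times> 'b) \<in> graph F" for k using assms by simp
  qed
  then show ?thesis using assms
    unfolding contingent_derivative_ball_def contingent_derivative_def by force
qed


lemma key:
  fixes F :: "'a::banach \<Rightarrow> 'b::banach set" and xb :: 'a and yb :: 'b
  assumes Gcl: "closed (graph F \<inter> (cball xb R \<times> cball yb R))"
    and WR: "\<And>u w. dist u xb < R \<Longrightarrow> dist w yb < R \<Longrightarrow> (u, w) \<in> W"
    and hyp: "\<forall>(x, y) \<in> W \<inter> graph F.
           (SUP z\<in>sphere (0::'b) 1. ereal (infdist z (contingent_derivative_ball F x y c))) \<le> ereal lam"
    and c: "c > 0" and lam: "0 \<le> lam" and rp: "r' > 0" and al: "\<alpha> > 0" and eta: "\<eta> > 0"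
    and le1: "lam + \<eta> \<le> 1" and lt1: "lam + \<eta> + r' * (c + 2 * \<alpha>) < 1"
    and R: "R > 0" and s1: "s \<le> \<alpha> * r' * R / 2" and s2: "s \<le> r' * R / 2"
    and xy: "(x, y) \<in> graph F" and x: "dist x xb < R / 4" and y: "dist y yb < R / 4"
    and v: "dist v y < s"
  shows "\<exists>u. v \<in> F u \<and> dist u x \<le> dist y v / r'"
proof -
  define G where "G = graph F \<inter> (cball xb R \<times> cball yb R)"
  define f where "f p = dist (snd p) v" for p :: "'a \<times> 'b"
  define D where "D p q = r' * (dist (fst p) (fst q) + \<alpha> * dist (snd p) (snd q))" for p q :: "'a \<times> 'b"
  have xyG: "(x, y) \<in> G" using xy x y R by (simp add: G_def dist_commute)
  have "\<exists>p\<in>G. f p + D p (x, y) \<le> f (x, y) \<and> (\<forall>q\<in>G. f p \<le> f q + D q p)"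
  proof (rule ekeland[where \<kappa> = "r' * min 1 \<alpha>"])
    show "closed G" using Gcl by (simp add: G_def)
    show "(x, y) \<in> G" by (rule xyG)
    show "0 \<le> f p" for p by (simp add: f_def)
    show "continuous_on G f" unfolding f_def by (intro continuous_intros)
    show "D p r \<le> D p q + D q r" for p q r
    proof -
      have "dist (fst p) (fst r) \<le> dist (fst p) (fst q) + dist (fst q) (fst r)" by (rule dist_triangle)
      moreover have "dist (snd p) (snd r) \<le> dist (snd p) (snd q) + dist (snd q) (snd r)" by (rule dist_triangle)
      ultimately have "dist (fst p) (fst r) + \<alpha> * dist (snd p) (snd r) \<le>
          (dist (fst p) (fst q) + \<alpha> * dist (snd p) (snd q)) + (dist (fst q) (fst r) + \<alpha> * dist (snd q) (snd r))"
        using mult_left_mono[of "dist (snd p) (snd r)" "dist (snd p) (snd q) + dist (snd q) (snd r)" \<alpha>] al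
        by (simp add: distrib_left)
      then show ?thesis unfolding D_def using rp
        by (metis distrib_left less_eq_real_def mult_left_mono)
    qed
    show "D p p = 0" for p by (simp add: D_def)
    show "0 < r' * min 1 \<alpha>" using rp al by simp
    show "r' * min 1 \<alpha> * dist p q \<le> D p q" for p q
    proof -
      have "dist p q \<le> dist (fst p) (fst q) + dist (snd p) (snd q)"
      proof -
        have e: "p - q = (fst p - fst q, snd p - snd q)" by (simp add: prod_eq_iff)
        show ?thesis using norm_Pair_le[of "fst p - fst q" "snd p - snd q"]
          unfolding dist_norm e by simp
      qed
      then have "min 1 \<alpha> * dist p q \<le> min 1 \<alpha> * (dist (fst p) (fst q) + dist (snd p) (snd q))"
        using al by (intro mult_left_mono) auto
      also have "\<dots> \<le> dist (fst p) (fst q) + \<alpha> * dist (snd p) (snd q)"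
      proof -
        have "min 1 \<alpha> * dist (fst p) (fst q) \<le> 1 * dist (fst p) (fst q)"
          by (intro mult_right_mono) auto
        moreover have "min 1 \<alpha> * dist (snd p) (snd q) \<le> \<alpha> * dist (snd p) (snd q)"
          by (intro mult_right_mono) auto
        ultimately show ?thesis by (simp add: distrib_left)
      qed
      finally show ?thesis unfolding D_def using rp by (simp add: mult.assoc mult_left_mono)
    qed
    show "continuous_on UNIV (\<lambda>q. D q p)" for p unfolding D_def by (intro continuous_intros)
  qed
  then obtain u w where uwG: "(u, w) \<in> G" and E1: "f (u, w) + D (u, w) (x, y) \<le> f (x, y)"
    and E2: "\<And>q. q \<in> G \<Longrightarrow> f (u, w) \<le> f q + D q (u, w)" by auto
  have E1': "dist w v + r' * (dist u x + \<alpha> * dist w y) \<le> dist y v"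
    using E1 by (simp add: f_def D_def)
  have yv: "dist y v < s" using v by (simp add: dist_commute)
  have nn1: "0 \<le> r' * (\<alpha> * dist w y)" "0 \<le> r' * dist u x" using rp al by simp_all
  have E1'': "dist w v + (r' * dist u x + r' * (\<alpha> * dist w y)) \<le> dist y v"
    using E1' by (simp add: distrib_left)
  have "r' * dist u x \<le> dist y v" using E1'' nn1 zero_le_dist[of w v] by linarith
  then have ux: "dist u x \<le> dist y v / r'" using rp by (simp add: field_simps)
  have "r' * (\<alpha> * dist w y) \<le> dist y v" using E1'' nn1 zero_le_dist[of w v] by linarith
  then have "r' * \<alpha> * dist w y \<le> dist y v" by (simp add: mult.assoc)
  then have "(r' * \<alpha>) * dist w y < (r' * \<alpha>) * (R / 2)" using yv s1 by (simp add: mult.commute mult.left_commute)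
  then have "dist w y < R / 2" using rp al by (simp add: mult_less_cancel_left_pos)
  then have wyb: "dist w yb < 3 * R / 4" using y dist_triangle[of w yb y] by linarith
  have "r' * dist u x < r' * (R / 2)" using \<open>r' * dist u x \<le> dist y v\<close> yv s2 by simp
  then have "dist u x < R / 2" using rp by (simp add: mult_less_cancel_left_pos)
  then have uxb: "dist u xb < 3 * R / 4" using x dist_triangle[of u xb x] by linarith
  have uwW: "(u, w) \<in> W" using WR uxb wyb R by simp
  have uwgr: "(u, w) \<in> graph F" using uwG by (simp add: G_def)
  have wv: "w = v"
  proof (rule ccontr)
    assume "w \<noteq> v"
    define nv where "nv = dist v w"
    have nv: "nv > 0" using \<open>w \<noteq> v\<close> by (simp add: nv_def)
    define z where "z = (1 / nv) *\<^sub>R (v - w)"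
    have nz: "norm z = 1" using nv by (simp add: z_def nv_def dist_norm)
    have wvz: "w - v = (- nv) *\<^sub>R z" using nv by (simp add: z_def)
    define DS where "DS = contingent_derivative_ball F u w c"
    have "ereal (infdist z DS) \<le> (SUP z\<in>sphere (0::'b) 1. ereal (infdist z DS))"
      by (rule SUP_upper) (simp add: nz)
    also have "\<dots> \<le> ereal lam" using hyp uwW uwgr by (auto simp: DS_def)
    finally have inf: "infdist z DS \<le> lam" by simp
    have "0 \<in> DS" using zero_in_Dball[OF uwgr, of c] c unfolding DS_def by simp
    then have DSne: "DS \<noteq> {}" by blast
    have "infdist z DS < lam + \<eta>" using inf eta by simp
    then obtain k where kD: "k \<in> DS" and kz: "dist z k < lam + \<eta>"
      using DSne by (auto simp: infdist_notempty cINF_less_iff)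
    obtain h where h: "norm h \<le> c" and hk: "(h, k) \<in> contingent_cone (graph F) (u, w)"
      using kD by (auto simp: DS_def contingent_derivative_ball_def contingent_derivative_def)
    then obtain t :: "nat \<Rightarrow> real" and hs where tpos: "\<And>n. t n > 0" and t0: "t \<longlonglongrightarrow> 0"
      and hsl: "hs \<longlonglongrightarrow> (h, k)" and hsg: "\<And>n. (u, w) + t n *\<^sub>R hs n \<in> graph F"
      unfolding contingent_cone_def by blast
    define a where "a n = fst (hs n)" for n
    define b where "b n = snd (hs n)" for n
    have al_: "a \<longlonglongrightarrow> h" unfolding a_def using tendsto_fst[OF hsl] by simp
    have bl: "b \<longlonglongrightarrow> k" unfolding b_def using tendsto_snd[OF hsl] by simp
    have pt: "(u + t n *\<^sub>R a n, w + t n *\<^sub>R b n) \<in> graph F" for n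
    proof -
      have "(u, w) + t n *\<^sub>R hs n = (u + t n *\<^sub>R a n, w + t n *\<^sub>R b n)"
        by (simp add: a_def b_def prod_eq_iff)
      then show ?thesis using hsg[of n] by simp
    qed
    have "norm k \<le> norm z + norm (k - z)" using norm_triangle_ineq[of z "k - z"] by simp
    moreover have "norm (k - z) = dist z k" by (simp add: dist_norm norm_minus_commute)
    ultimately have nk: "norm k \<le> 2" using kz nz le1 by linarith
    have L: "dist k z + r' * (norm h + \<alpha> * norm k) < 1"
    proof -
      have "r' * (norm h + \<alpha> * norm k) \<le> r' * (c + 2 * \<alpha>)"
        using h nk al rp by (intro mult_left_mono add_mono) auto
      then show ?thesis using kz lt1 by (simp add: dist_commute)
    qed
    have ev1: "eventually (\<lambda>n. t n < nv) sequentially" using order_tendstoD(2)[OF t0 nv] .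
    have ua: "(\<lambda>n. u + t n *\<^sub>R a n) \<longlonglongrightarrow> u"
      using tendsto_add[OF tendsto_const tendsto_scaleR[OF t0 al_]] by simp
    have wb: "(\<lambda>n. w + t n *\<^sub>R b n) \<longlonglongrightarrow> w"
      using tendsto_add[OF tendsto_const tendsto_scaleR[OF t0 bl]] by simp
    have R4: "R / 4 > 0" using R by simp
    have ev2: "eventually (\<lambda>n. dist (u + t n *\<^sub>R a n) u < R / 4) sequentially" using tendstoD[OF ua R4] .
    have ev3: "eventually (\<lambda>n. dist (w + t n *\<^sub>R b n) w < R / 4) sequentially" using tendstoD[OF wb R4] .
    have ev4: "eventually (\<lambda>n. dist (b n) z + r' * (norm (a n) + \<alpha> * norm (b n)) < 1) sequentially"
      by (rule order_tendstoD(2)[OF _ L]) (intro tendsto_intros al_ bl)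
    obtain n where n1: "t n < nv" and n2: "dist (u + t n *\<^sub>R a n) u < R / 4"
      and n3: "dist (w + t n *\<^sub>R b n) w < R / 4"
      and n4: "dist (b n) z + r' * (norm (a n) + \<alpha> * norm (b n)) < 1"
      using eventually_happens'[OF trivial_limit_sequentially
          eventually_conj[OF ev1 eventually_conj[OF ev2 eventually_conj[OF ev3 ev4]]]] by blast
    define q where "q = (u + t n *\<^sub>R a n, w + t n *\<^sub>R b n)"
    have qG: "q \<in> G" unfolding q_def G_def using pt[of n]
      using n2 n3 uxb wyb dist_triangle[of "u + t n *\<^sub>R a n" xb u] dist_triangle[of "w + t n *\<^sub>R b n" yb w]
      by (auto simp: dist_commute)
    have Eq: "dist w v \<le> dist (w + t n *\<^sub>R b n) v + r' * (t n * norm (a n) + \<alpha> * (t n * norm (b n)))"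
      using E2[OF qG] tpos[of n] by (simp add: q_def f_def D_def dist_norm abs_of_pos)
    have "w + t n *\<^sub>R b n - v = (t n - nv) *\<^sub>R z + t n *\<^sub>R (b n - z)"
      using wvz by (simp add: algebra_simps)
    then have "dist (w + t n *\<^sub>R b n) v \<le> (nv - t n) + t n * dist (b n) z"
      using norm_triangle_ineq[of "(t n - nv) *\<^sub>R z" "t n *\<^sub>R (b n - z)"] nz n1 tpos[of n]
      by (simp add: dist_norm abs_of_pos)
    with Eq have "nv \<le> nv - t n + t n * (dist (b n) z + r' * (norm (a n) + \<alpha> * norm (b n)))"
      by (simp add: nv_def dist_commute algebra_simps)
    moreover have "t n * (dist (b n) z + r' * (norm (a n) + \<alpha> * norm (b n))) < t n"
      using n4 tpos[of n] by simp
    ultimately show False by linarith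
  qed
  have "v \<in> F u" using uwgr wv by (simp add: graph_def)
  with ux show ?thesis by blast
qed


theorem mainTheorem7:
  fixes F :: "'a::banach \<Rightarrow> 'b::banach set"
    and xb :: 'a and yb :: 'b and W :: "('a \<times> 'b) set" and c lam :: real
  assumes "locally_closed_graph F xb yb"
    and "(xb, yb) \<in> graph F"
    and "open W" and "(xb, yb) \<in> W"
    and "c > 0" and "0 \<le> lam" and "lam < 1"
    and "\<forall>(x, y) \<in> W \<inter> graph F.
           (SUP z\<in>sphere (0::'b) 1. ereal (infdist z (contingent_derivative_ball F x y c))) \<le> ereal lam"
  shows "sur F xb yb \<ge> ereal ((1 - lam) / c)"
proof -
  note lcg = assms(1) and xbg = assms(2) and Wo = assms(3) and xbW = assms(4)
    and c = assms(5) and lam0 = assms(6) and lam1 = assms(7) and hyp = assms(8)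
  obtain \<rho> where \<rho>: "\<rho> > 0" and cl\<rho>: "closed (graph F \<inter> (cball xb \<rho> \<times> cball yb \<rho>))"
    using lcg unfolding locally_closed_graph_def by blast
  obtain e where e: "e > 0" and eW: "ball (xb, yb) e \<subseteq> W"
    using Wo xbW open_contains_ball by blast
  define R where "R = min \<rho> (e / 2)"
  have R: "R > 0" using \<rho> e by (simp add: R_def)
  have Gcl: "closed (graph F \<inter> (cball xb R \<times> cball yb R))"
  proof -
    have "graph F \<inter> (cball xb R \<times> cball yb R) =
        (graph F \<inter> (cball xb \<rho> \<times> cball yb \<rho>)) \<inter> (cball xb R \<times> cball yb R)"
      by (auto simp: R_def)
    then show ?thesis using cl\<rho> by (simp add: closed_Int closed_Times)
  qed
  have WR: "(u, w) \<in> W" if "dist u xb < R" "dist w yb < R" for u w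
  proof -
    have "dist (u, w) (xb, yb) \<le> dist u xb + dist w yb"
      using norm_Pair_le[of "u - xb" "w - yb"] by (simp add: dist_norm)
    also have "\<dots> < e" using that by (simp add: R_def)
    finally show ?thesis using eW by (auto simp: dist_commute)
  qed
  define q where "q = (1 - lam) / c"
  have q: "q > 0" using c lam1 by (simp add: q_def)
  have rates: "r \<in> sur_rates F xb yb" if r0: "0 < r" and rq: "r < q" for r
  proof -
    define r' where "r' = (r + q) / 2"
    have rr': "r < r'" and r'q: "r' < q" and r'0: "r' > 0" using r0 rq by (auto simp: r'_def)
    define g where "g = 1 - lam - r' * c"
    have "r' * c < q * c" using r'q c by simp
    then have g: "g > 0" using c by (simp add: g_def q_def)
    have gle: "g \<le> 1 - lam" using r'0 c by (simp add: g_def)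
    define \<eta> where "\<eta> = g / 4"
    define \<alpha> where "\<alpha> = g / (4 * r')"
    have eta: "\<eta> > 0" and al: "\<alpha> > 0" using g r'0 by (auto simp: \<eta>_def \<alpha>_def)
    have le1: "lam + \<eta> \<le> 1" using gle g by (simp add: \<eta>_def)
    have "r' * (2 * \<alpha>) = g / 2" using r'0 by (simp add: \<alpha>_def field_simps)
    then have e2: "r' * (c + 2 * \<alpha>) = r' * c + g / 2" by (simp add: distrib_left)
    have lt1: "lam + \<eta> + r' * (c + 2 * \<alpha>) < 1" unfolding e2 using g g_def \<eta>_def by linarith
    define s where "s = min (\<alpha> * r' * R / 2) (r' * R / 2)"
    have s1: "s \<le> \<alpha> * r' * R / 2" and s2: "s \<le> r' * R / 2" by (auto simp: s_def)
    have s0: "s > 0" using al r'0 R by (simp add: s_def)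
    define m where "m = min (R / 4) s"
    have m0: "m > 0" using R s0 by (simp add: m_def)
    define \<epsilon> where "\<epsilon> = m / (r + 2)"
    have \<epsilon>0: "\<epsilon> > 0" using m0 r0 by (simp add: \<epsilon>_def)
    have \<epsilon>m: "\<epsilon> * (r + 2) = m" using r0 by (simp add: \<epsilon>_def)
    have \<epsilon>le: "\<epsilon> \<le> m" using \<epsilon>m \<epsilon>0 r0
      by (smt (verit) mult_le_cancel_left1)
    have key': "\<exists>u. v \<in> F u \<and> dist u x \<le> dist y v / r'"
      if "(x, y) \<in> graph F" "dist x xb < R / 4" "dist y yb < R / 4" "dist v y < s" for x y v
      apply (rule key[of F xb R yb W c lam r' \<alpha> \<eta> s x y v])
                      apply (rule Gcl)
                     apply (erule (1) WR)
                    apply (rule hyp)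
      using c lam0 r'0 al eta le1 lt1 R s1 s2 that by simp_all
    show ?thesis unfolding sur_rates_def
    proof (intro CollectI conjI exI[of _ \<epsilon>] \<epsilon>0 allI impI r0 subsetI)
      fix x y t v
      assume A: "(x, y) \<in> graph F \<and> norm (x - xb) < \<epsilon> \<and> 0 \<le> t"
        and vin: "v \<in> ball y (r * t) \<inter> ball yb \<epsilon>"
      have xy: "(x, y) \<in> graph F" and xxb: "dist x xb < \<epsilon>" using A by (auto simp: dist_norm)
      have yv: "dist y v < r * t" and ybv: "dist yb v < \<epsilon>" using vin by auto
      show "v \<in> (\<Union>u\<in>ball x t. F u)"
      proof (cases "dist y yb < R / 4 \<and> dist v y < s")
        case True
        have "dist x xb < R / 4" using xxb \<epsilon>le by (simp add: m_def)
        then obtain u where u: "v \<in> F u" "dist u x \<le> dist y v / r'"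
          using key'[OF xy] True by blast
        have "dist y v / r' \<le> dist y v / r" using rr' r0
          by (simp add: frac_le)
        also have "\<dots> < t" using yv r0 by (simp add: pos_divide_less_eq mult.commute)
        finally have "dist x u < t" using u by (simp add: dist_commute)
        then show ?thesis using u by auto
      next
        case False
        have "dist v yb < s" using ybv \<epsilon>le by (simp add: m_def dist_commute)
        moreover have "dist xb xb < R / 4" "dist yb yb < R / 4" using R by auto
        ultimately obtain u where u: "v \<in> F u" "dist u xb \<le> dist yb v / r'"
          using key'[OF xbg] by blast
        have "dist yb v / r' < \<epsilon> / r'" using ybv r'0 by (simp add: divide_strict_right_mono)
        then have dxu: "dist x u < \<epsilon> + \<epsilon> / r'"
          using u xxb dist_triangle[of x u xb] by (simp add: dist_commute)
        have "m - \<epsilon> \<le> dist v y"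
        proof (cases "dist y yb < R / 4")
          case True
          then have "s \<le> dist v y" using False by auto
          then show ?thesis using \<epsilon>0 by (simp add: m_def)
        next
          case F2: False
          have "dist y yb \<le> dist y v + dist v yb" by (rule dist_triangle)
          then have "R / 4 - \<epsilon> \<le> dist v y" using F2 ybv by (simp add: dist_commute)
          then show ?thesis by (simp add: m_def)
        qed
        then have "m - \<epsilon> < r * t" using yv by (simp add: dist_commute)
        moreover have "r * (\<epsilon> / r') \<le> \<epsilon>"
        proof -
          have "r * (\<epsilon> / r') \<le> r' * (\<epsilon> / r')" using rr' \<epsilon>0 r'0 by (intro mult_right_mono) auto
          then show ?thesis using r'0 by simp
        qed
        ultimately have "r * (\<epsilon> + \<epsilon> / r') < r * t" using \<epsilon>m by (simp add: distrib_left algebra_simps)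
        then have "\<epsilon> + \<epsilon> / r' < t" using r0 by simp
        then have "dist x u < t" using dxu by simp
        then show ?thesis using u by auto
      qed
    qed
  qed
  have ne: "sur_rates F xb yb \<noteq> {}" using rates[of "q / 2"] q by auto
  have "ereal q \<le> Sup (ereal ` sur_rates F xb yb)"
  proof (rule ccontr)
    assume "\<not> ereal q \<le> Sup (ereal ` sur_rates F xb yb)"
    then have lt: "Sup (ereal ` sur_rates F xb yb) < ereal q" by (simp add: not_le)
    obtain z where z1: "Sup (ereal ` sur_rates F xb yb) < ereal z" and z2: "ereal z < ereal q"
      using ereal_dense2[OF lt] by blast
    have zq: "z < q" using z2 by simp
    define r where "r = max z (q / 2)"
    have "0 < r" using q by (simp add: r_def)
    moreover have "r < q" using zq q by (simp add: r_def)
    ultimately have "r \<in> sur_rates F xb yb" by (rule rates)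
    then have "ereal r \<le> Sup (ereal ` sur_rates F xb yb)" by (intro Sup_upper imageI)
    moreover have "ereal z \<le> ereal r" by (simp add: r_def)
    ultimately have "ereal z \<le> Sup (ereal ` sur_rates F xb yb)" by (meson order_trans)
    then show False using z1 by (meson not_le)
  qed
  then show ?thesis using ne by (simp add: sur_def q_def)
qed

end
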